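(* Let $f:\mathbb{R}^n\to\mathbb{R}$ be a continuously differentiable convex function, and $s$ a positive integer. Let $h(x)=\sum_{i=1}^n h_i(x_i)$ with each $h_i:\mathbb{R}\to\mathbb{R}$ convex and continuously differentiable, and assume $h$ is supercoercive ($\lim_{\|x\|\to\infty}h(x)/\|x\|=\infty$). Assume $L_h h-f$ is convex for some $L_h>0$ and let $L>L_h$. Let $(x_k)$ be generated by the BPG algorithm with $h$ and $L$. Then every limit point $\bar x$ of $(x_k)$ is $L$-Bregman stationary, i.e. $$\bar x\in\operatorname*{argmin}_{y\in C_s}\ \nabla f(\bar x)^T(y-\bar x)+L D_h(y,\bar x).$$
   Context: $C_s=\{x\in\mathbb{R}^n:\|x\|_0\le s\}$ where $\|x\|_0$ is the number of nonzero entries. $D_h(y,x)=h(y)-h(x)-\nabla h(x)^T(y-x)$. BPG algorithm: start from $x_0\in C_s$ and for $k\ge0$ pick $x_{k+1}\in\operatorname{argmin}_{x\in C_s}\ \nabla f(x_k)^T(x-x_k)+LD_h(x,x_k)$. *)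

theory Defs
  imports "HOL-Analysis.Analysis"
begin

definition l0norm :: "real^'n \<Rightarrow> nat" where
  "l0norm x = card {i. x $ i \<noteq> 0}"

definition sparse_set :: "nat \<Rightarrow> (real^'n) set" ("C\<^sub>_") where
  "sparse_set s = {x. l0norm x \<le> s}"

definition bregman :: "(real^'n \<Rightarrow> real) \<Rightarrow> (real^'n \<Rightarrow> real^'n) \<Rightarrow> real^'n \<Rightarrow> real^'n \<Rightarrow> real" where
  "bregman h gh y x = h y - h x - gh x \<bullet> (y - x)"

definition argmin_on :: "('a \<Rightarrow> real) \<Rightarrow> 'a set \<Rightarrow> 'a set" where
  "argmin_on g S = {x \<in> S. \<forall>y\<in>S. g x \<le> g y}"

definition bpg_obj :: "(real^'n \<Rightarrow> real^'n) \<Rightarrow> (real^'n \<Rightarrow> real) \<Rightarrow> (real^'n \<Rightarrow> real^'n) \<Rightarrow> real \<Rightarrow> real^'n \<Rightarrow> real^'n \<Rightarrow> real" where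
  "bpg_obj gf h gh L x y = gf x \<bullet> (y - x) + L * bregman h gh y x"

end

theory Submission
  imports Defs
begin

lemma grad_ineq:
  fixes g :: "'a::real_inner \<Rightarrow> real"
  assumes cv: "convex_on UNIV g" and d: "(g has_derivative (\<lambda>v. v \<bullet> G)) (at x)"
  shows "g x + (y - x) \<bullet> G \<le> g y"
proof -
  define \<phi> where "\<phi> t = g (x + t *\<^sub>R (y - x))" for t::real
  have "convex_on UNIV \<phi>"
  proof (rule convex_onI)
    fix t a b :: real assume "t > 0" "t < 1"
    have "x + ((1 - t) *\<^sub>R a + t *\<^sub>R b) *\<^sub>R (y - x) = (1 - t) *\<^sub>R (x + a *\<^sub>R (y - x)) + t *\<^sub>R (x + b *\<^sub>R (y - x))"
      by (simp add: algebra_simps)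
    then show "\<phi> ((1 - t) *\<^sub>R a + t *\<^sub>R b) \<le> (1 - t) * \<phi> a + t * \<phi> b"
      unfolding \<phi>_def using convex_onD[OF cv, of t] \<open>t>0\<close> \<open>t<1\<close> by simp
  qed simp
  moreover have "(\<phi> has_field_derivative ((y - x) \<bullet> G)) (at 0)"
  proof -
    have l: "((\<lambda>t::real. x + t *\<^sub>R (y - x)) has_derivative (\<lambda>t. t *\<^sub>R (y - x))) (at 0)"
      by (auto intro!: derivative_eq_intros)
    have d0: "(g has_derivative (\<lambda>v. v \<bullet> G)) (at (x + 0 *\<^sub>R (y - x)))" using d by simp
    have "(\<phi> has_derivative (\<lambda>t. (t *\<^sub>R (y - x)) \<bullet> G)) (at 0)"
      unfolding \<phi>_def[abs_def] using diff_chain_at[OF l d0] by (simp add: o_def)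
    moreover have "(\<lambda>t. (t *\<^sub>R (y - x)) \<bullet> G) = (*) ((y - x) \<bullet> G)"
      by (auto simp: fun_eq_iff)
    ultimately show ?thesis unfolding has_field_derivative_def by simp
  qed
  ultimately have "\<phi> 1 - \<phi> 0 \<ge> ((y - x) \<bullet> G) * (1 - 0)"
    by (intro convex_on_imp_above_tangent[where A=UNIV]) auto
  then show ?thesis unfolding \<phi>_def by simp
qed

lemma h_deriv:
  fixes hi dhi :: "'n::finite \<Rightarrow> real \<Rightarrow> real"
  assumes hi_deriv: "\<And>i t. (hi i has_real_derivative dhi i t) (at t)"
  shows "((\<lambda>z::real^'n. \<Sum>i\<in>UNIV. hi i (z $ i)) has_derivative (\<lambda>v. v \<bullet> (\<chi> i. dhi i (z $ i)))) (at z)"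
proof -
  have "\<And>i. ((\<lambda>z::real^'n. hi i (z $ i)) has_derivative (\<lambda>v. dhi i (z $ i) * v $ i)) (at z)"
  proof -
    fix i
    have a: "((\<lambda>z::real^'n. z $ i) has_derivative (\<lambda>v. v $ i)) (at z)"
      by (rule bounded_linear.has_derivative[OF bounded_linear_vec_nth]) (rule has_derivative_ident)
    have b: "(hi i has_derivative (\<lambda>t. dhi i (z $ i) * t)) (at (z $ i))"
      using hi_deriv[of i "z $ i"] unfolding has_field_derivative_def .
    show "?thesis i" using diff_chain_at[OF a b] by (simp add: o_def)
  qed
  then have "((\<lambda>z::real^'n. \<Sum>i\<in>UNIV. hi i (z $ i)) has_derivative (\<lambda>v. \<Sum>i\<in>UNIV. dhi i (z $ i) * v $ i)) (at z)"
    by (rule has_derivative_sum)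
  then show ?thesis by (simp add: inner_vec_def mult.commute)
qed

theorem theoremA3:
  fixes f :: "real^'n \<Rightarrow> real" and gf :: "real^'n \<Rightarrow> real^'n"
    and hi :: "'n \<Rightarrow> real \<Rightarrow> real" and dhi :: "'n \<Rightarrow> real \<Rightarrow> real"
    and h :: "real^'n \<Rightarrow> real" and gh :: "real^'n \<Rightarrow> real^'n"
    and s :: nat and Lh L :: real and x :: "nat \<Rightarrow> real^'n" and xbar :: "real^'n"
  assumes f_grad: "\<And>z. GDERIV f z :> gf z"
    and f_C1: "continuous_on UNIV gf"
    and f_convex: "convex_on UNIV f"
    and s_pos: "s > 0"
    and hi_deriv: "\<And>i t. (hi i has_real_derivative dhi i t) (at t)"
    and hi_C1: "\<And>i. continuous_on UNIV (dhi i)"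
    and hi_convex: "\<And>i. convex_on UNIV (hi i)"
    and h_def: "\<And>z. h z = (\<Sum>i\<in>UNIV. hi i (z $ i))"
    and gh_def: "\<And>z. gh z = (\<chi> i. dhi i (z $ i))"
    and h_supercoercive: "filterlim (\<lambda>z. h z / norm z) at_top at_infinity"
    and Lh_pos: "Lh > 0"
    and Lh_convex: "convex_on UNIV (\<lambda>z. Lh * h z - f z)"
    and L_gt: "L > Lh"
    and x0: "x 0 \<in> sparse_set s"
    and x_step: "\<And>k. x (Suc k) \<in> argmin_on (bpg_obj gf h gh L (x k)) (sparse_set s)"
    and limpt: "\<exists>r. strict_mono r \<and> (x \<circ> r) \<longlonglongrightarrow> xbar"
  shows "xbar \<in> argmin_on (bpg_obj gf h gh L xbar) (sparse_set s)"
proof -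
  let ?P = "bpg_obj gf h gh L"
  have hfun: "h = (\<lambda>z. \<Sum>i\<in>UNIV. hi i (z $ i))" using h_def by (simp add: fun_eq_iff)
  have hder: "(h has_derivative (\<lambda>v. v \<bullet> gh z)) (at z)" for z
    unfolding hfun gh_def by (rule h_deriv[OF hi_deriv])
  have fder: "(f has_derivative (\<lambda>v. v \<bullet> gf z)) (at z)" for z
    using f_grad[of z] unfolding gderiv_def .
  have Df: "f a + (b - a) \<bullet> gf a \<le> f b" for a b
    by (rule grad_ineq[OF f_convex fder])
  have gder: "((\<lambda>z. Lh * h z - f z) has_derivative (\<lambda>v. v \<bullet> (Lh *\<^sub>R gh z - gf z))) (at z)" for z
  proof -
    have "((\<lambda>z. Lh * h z - f z) has_derivative (\<lambda>v. Lh * (v \<bullet> gh z) - v \<bullet> gf z)) (at z)"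
      by (intro has_derivative_diff has_derivative_mult_right hder fder)
    then show ?thesis by (simp add: inner_diff_right)
  qed
  have Dg: "Lh * h a - f a + (b - a) \<bullet> (Lh *\<^sub>R gh a - gf a) \<le> Lh * h b - f b" for a b
    by (rule grad_ineq[OF Lh_convex gder])
  have desc: "f b \<le> f a + (b - a) \<bullet> gf a + Lh * bregman h gh b a" for a b
    using Dg[of a b] unfolding bregman_def by (simp add: inner_diff_right inner_commute algebra_simps)
  have Bnn: "bregman h gh b a \<ge> 0" for a b
  proof -
    have "Lh * bregman h gh b a \<ge> 0" using desc[of b a] Df[of a b] by linarith
    then show ?thesis using Lh_pos by (simp add: zero_le_mult_iff)
  qed
  have mem: "x k \<in> sparse_set s" for k
  proof (cases k)
    case 0 then show ?thesis using x0 by simp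
  next
    case (Suc m) then show ?thesis using x_step[of m] unfolding argmin_on_def by blast
  qed
  have stepk: "?P (x k) (x (Suc k)) \<le> 0" for k
  proof -
    have "?P (x k) (x (Suc k)) \<le> ?P (x k) (x k)"
      using x_step[of k] mem[of k] unfolding argmin_on_def by auto
    then show ?thesis by (simp add: bpg_obj_def bregman_def)
  qed
  have Pexp: "?P a b = (b - a) \<bullet> gf a + L * bregman h gh b a" for a b
    by (simp add: bpg_obj_def inner_commute)
  have fdec: "f (x (Suc k)) \<le> f (x k)" for k
  proof -
    have "Lh * bregman h gh (x (Suc k)) (x k) \<le> L * bregman h gh (x (Suc k)) (x k)"
      using L_gt Bnn by (intro mult_right_mono) auto
    then show ?thesis using desc[of "x (Suc k)" "x k"] stepk[of k] Pexp[of "x k" "x (Suc k)"] by linarith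
  qed
  have lower: "?P (x k) (x (Suc k)) \<ge> f (x (Suc k)) - f (x k)" for k
  proof -
    have "Lh * bregman h gh (x (Suc k)) (x k) \<le> L * bregman h gh (x (Suc k)) (x k)"
      using L_gt Bnn by (intro mult_right_mono) auto
    then show ?thesis using desc[of "x (Suc k)" "x k"] Pexp[of "x k" "x (Suc k)"] by linarith
  qed
  have dec: "decseq (\<lambda>k. f (x k))" using fdec by (simp add: decseq_Suc_iff)
  obtain r where r: "strict_mono r" "(x \<circ> r) \<longlonglongrightarrow> xbar" using limpt by blast
  have xr: "(\<lambda>j. x (r j)) \<longlonglongrightarrow> xbar" using r(2) by (simp add: o_def)
  have fcont: "isCont f z" for z using has_derivative_continuous[OF fder] .
  have hcont: "isCont h z" for z using has_derivative_continuous[OF hder] .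
  have gfcont: "isCont gf z" for z using f_C1 by (simp add: continuous_on_eq_continuous_at)
  have flim: "(\<lambda>j. f (x (r j))) \<longlonglongrightarrow> f xbar" by (rule isCont_tendsto_compose[OF fcont xr])
  have hlim: "(\<lambda>j. h (x (r j))) \<longlonglongrightarrow> h xbar" by (rule isCont_tendsto_compose[OF hcont xr])
  have gflim: "(\<lambda>j. gf (x (r j))) \<longlonglongrightarrow> gf xbar" by (rule isCont_tendsto_compose[OF gfcont xr])
  have ghlim: "(\<lambda>j. gh (x (r j))) \<longlonglongrightarrow> gh xbar"
    unfolding gh_def
  proof (intro tendsto_vec_lambda)
    fix i
    have "isCont (dhi i) (xbar $ i)" using hi_C1[of i] by (simp add: continuous_on_eq_continuous_at)
    then show "(\<lambda>j. dhi i (x (r j) $ i)) \<longlonglongrightarrow> dhi i (xbar $ i)"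
      by (rule isCont_tendsto_compose) (intro tendsto_vec_nth xr)
  qed
  have fbound: "f xbar \<le> f (x k)" for k
  proof (rule LIMSEQ_le_const2[OF flim])
    show "\<exists>N. \<forall>n\<ge>N. f (x (r n)) \<le> f (x k)"
    proof (intro exI allI impI)
      fix n assume "k \<le> n"
      then have "k \<le> r n" using seq_suble[OF r(1), of n] by linarith
      then show "f (x (r n)) \<le> f (x k)" using dec by (simp add: decseq_def)
    qed
  qed
  have xbar_mem: "xbar \<in> sparse_set s"
  proof -
    have "\<forall>\<^sub>F j in sequentially. \<forall>i. xbar $ i \<noteq> 0 \<longrightarrow> x (r j) $ i \<noteq> 0"
    proof (rule eventually_all_finite)
      fix i
      show "\<forall>\<^sub>F j in sequentially. xbar $ i \<noteq> 0 \<longrightarrow> x (r j) $ i \<noteq> 0"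
      proof (cases "xbar $ i = 0")
        case False
        have "(\<lambda>j. x (r j) $ i) \<longlonglongrightarrow> xbar $ i" by (intro tendsto_vec_nth xr)
        from tendsto_imp_eventually_ne[OF this False] show ?thesis by (auto elim: eventually_mono)
      qed simp
    qed
    then obtain N where "\<forall>j\<ge>N. \<forall>i. xbar $ i \<noteq> 0 \<longrightarrow> x (r j) $ i \<noteq> 0"
      unfolding eventually_sequentially by blast
    then have j: "\<forall>i. xbar $ i \<noteq> 0 \<longrightarrow> x (r N) $ i \<noteq> 0" by blast
    define j where "j = N"
    have "card {i. xbar $ i \<noteq> 0} \<le> card {i. x (r j) $ i \<noteq> 0}"
      using j unfolding j_def by (intro card_mono) auto
    then show ?thesis using mem[of "r j"] j_def unfolding sparse_set_def l0norm_def by simp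
  qed
  have opt: "?P xbar y \<ge> 0" if y: "y \<in> sparse_set s" for y
  proof -
    have l1: "(\<lambda>j. ?P (x (r j)) y) \<longlonglongrightarrow> ?P xbar y"
      unfolding bpg_obj_def bregman_def
      by (intro tendsto_add tendsto_mult tendsto_diff tendsto_inner tendsto_const gflim hlim ghlim xr)
    have l2: "(\<lambda>j. f xbar - f (x (r j))) \<longlonglongrightarrow> f xbar - f xbar"
      by (intro tendsto_diff tendsto_const flim)
    have ev: "\<forall>\<^sub>F j in sequentially. f xbar - f (x (r j)) \<le> ?P (x (r j)) y"
    proof (rule always_eventually, rule allI)
      fix j
      have "?P (x (r j)) (x (Suc (r j))) \<le> ?P (x (r j)) y"
        using x_step[of "r j"] y unfolding argmin_on_def by auto
      then show "f xbar - f (x (r j)) \<le> ?P (x (r j)) y"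
        using lower[of "r j"] fbound[of "Suc (r j)"] by linarith
    qed
    have "f xbar - f xbar \<le> ?P xbar y" by (rule tendsto_le[OF _ l1 l2 ev]) simp
    then show ?thesis by simp
  qed
  have "?P xbar xbar = 0" by (simp add: bpg_obj_def bregman_def)
  then show ?thesis using xbar_mem opt unfolding argmin_on_def by auto
qed

end
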